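(* If $(A,W)$ is a $T_1$ Pratt comonoid and $A_0$ is a finite subset of $A$, then for every subset $y\subseteq A_0$ there exists $x\in W$ with $x\cap A_0=y$.
   Context: A Pratt comonoid is a pair $(A,W)$ where $A$ is a set and $W$ is a set of subsets of $A$ such that (i) $\emptyset\in W$ and $A\in W$; (ii) whenever $C\subseteq A\times A$ is such that for every $a\in A$ both the $a$-th row $\{b\mid (a,b)\in C\}$ and the $a$-th column $\{b\mid (b,a)\in C\}$ belong to $W$ (a crossword over $W$), the diagonal $\{b\mid (b,b)\in C\}$ also belongs to $W$. $(A,W)$ is $T_1$ if for all distinct $a,b\in A$ some member of $W$ contains $a$ but not $b$. *)

theory Defs
  imports Main
begin

definition crossword :: "'a set \<Rightarrow> 'a set set \<Rightarrow> ('a \<times> 'a) set \<Rightarrow> bool" where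
  "crossword A W C \<longleftrightarrow> C \<subseteq> A \<times> A \<and>
     (\<forall>a\<in>A. {b. (a, b) \<in> C} \<in> W \<and> {b. (b, a) \<in> C} \<in> W)"

definition pratt_comonoid :: "'a set \<Rightarrow> 'a set set \<Rightarrow> bool" where
  "pratt_comonoid A W \<longleftrightarrow>
     (\<forall>x\<in>W. x \<subseteq> A) \<and> {} \<in> W \<and> A \<in> W \<and>
     (\<forall>C. crossword A W C \<longrightarrow> {b. (b, b) \<in> C} \<in> W)"

definition T1_comonoid :: "'a set \<Rightarrow> 'a set set \<Rightarrow> bool" where
  "T1_comonoid A W \<longleftrightarrow>
     (\<forall>a\<in>A. \<forall>b\<in>A. a \<noteq> b \<longrightarrow> (\<exists>x\<in>W. a \<in> x \<and> b \<notin> x))"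

end

theory Submission
  imports Defs
begin

lemma pc_inter:
  assumes P: "pratt_comonoid A W" and u: "u \<in> W" and v: "v \<in> W"
  shows "u \<inter> v \<in> W"
proof -
  have sub: "u \<subseteq> A" "v \<subseteq> A" "{} \<in> W" and D: "\<And>C. crossword A W C \<Longrightarrow> {b. (b, b) \<in> C} \<in> W"
    using P u v unfolding pratt_comonoid_def by auto
  have "crossword A W (u \<times> v)"
    unfolding crossword_def
  proof (intro conjI ballI)
    show "u \<times> v \<subseteq> A \<times> A" using sub by auto
  next
    fix a assume "a \<in> A"
    have "{b. (a, b) \<in> u \<times> v} = (if a \<in> u then v else {})" by auto
    then show "{b. (a, b) \<in> u \<times> v} \<in> W" using v sub by simp
    have "{b. (b, a) \<in> u \<times> v} = (if a \<in> v then u else {})" by auto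
    then show "{b. (b, a) \<in> u \<times> v} \<in> W" using u sub by simp
  qed
  from D[OF this] show ?thesis by (simp add: Int_def)
qed

lemma pc_union:
  assumes P: "pratt_comonoid A W" and u: "u \<in> W" and v: "v \<in> W"
  shows "u \<union> v \<in> W"
proof -
  have sub: "u \<subseteq> A" "v \<subseteq> A" "A \<in> W" and D: "\<And>C. crossword A W C \<Longrightarrow> {b. (b, b) \<in> C} \<in> W"
    using P u v unfolding pratt_comonoid_def by auto
  let ?C = "(u \<times> A) \<union> (A \<times> v)"
  have "crossword A W ?C"
    unfolding crossword_def
  proof (intro conjI ballI)
    show "?C \<subseteq> A \<times> A" using sub by auto
  next
    fix a assume a: "a \<in> A"
    have "{b. (a, b) \<in> ?C} = (if a \<in> u then A else v)" using a sub by auto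
    then show "{b. (a, b) \<in> ?C} \<in> W" using v sub by simp
    have "{b. (b, a) \<in> ?C} = (if a \<in> v then A else u)" using a sub by auto
    then show "{b. (b, a) \<in> ?C} \<in> W" using u sub by simp
  qed
  from D[OF this] have "{b. (b, b) \<in> ?C} \<in> W" .
  moreover have "{b. (b, b) \<in> ?C} = u \<union> v" using sub by auto
  ultimately show ?thesis by simp
qed

lemma pc_sep:
  assumes P: "pratt_comonoid A W" and T: "T1_comonoid A W"
    and a: "a \<in> A" and fin: "finite B"
  shows "B \<subseteq> A \<Longrightarrow> a \<notin> B \<Longrightarrow> \<exists>x\<in>W. a \<in> x \<and> x \<inter> B = {}"
  using fin
proof (induction B rule: finite_induct)
  case empty
  then show ?case using P a unfolding pratt_comonoid_def by auto
next
  case (insert b B)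
  then obtain x where x: "x \<in> W" "a \<in> x" "x \<inter> B = {}" by auto
  have "a \<noteq> b" "b \<in> A" using insert by auto
  then obtain z where z: "z \<in> W" "a \<in> z" "b \<notin> z" using T a unfolding T1_comonoid_def by blast
  have "x \<inter> z \<in> W" using pc_inter[OF P x(1) z(1)] .
  then show ?case using x z by (intro bexI[of _ "x \<inter> z"]) auto
qed

theorem lemma3p1:
  assumes "pratt_comonoid A W"
    and "T1_comonoid A W"
    and "A0 \<subseteq> A" and "finite A0"
    and "y \<subseteq> A0"
  shows "\<exists>x\<in>W. x \<inter> A0 = y"
proof -
  have "finite y" using assms finite_subset by blast
  then show ?thesis using assms(5)
  proof (induction y rule: finite_induct)
    case empty
    then show ?case using assms(1) unfolding pratt_comonoid_def by auto
  next
    case (insert a y)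
    then obtain x where x: "x \<in> W" "x \<inter> A0 = y" by auto
    have aA: "a \<in> A" using insert assms by auto
    obtain z where z: "z \<in> W" "a \<in> z" "z \<inter> (A0 - {a}) = {}"
      using pc_sep[OF assms(1,2) aA, of "A0 - {a}"] assms by auto
    have "z \<inter> A0 = {a}" using z insert by auto
    then have "(x \<union> z) \<inter> A0 = insert a y" using x by auto
    then show ?case using pc_union[OF assms(1) x(1) z(1)] by blast
  qed
qed

end
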